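(* There is no pair $(\Lambda,\Lambda')$, where $\Lambda$ is a well-rounded lattice of rank $9$ in a $9$-dimensional Euclidean space and $\Lambda'$ is a sublattice generated by $9$ linearly independent minimal vectors of $\Lambda$, such that $\Lambda/\Lambda'\cong(\mathbb Z/3\mathbb Z)^3$.
   Context: Minimal vectors of a lattice are its nonzero vectors of smallest norm $x\cdot x$; a lattice is well-rounded if its minimal vectors span the ambient space. *)

theory Defs
  imports "HOL-Analysis.Analysis" "HOL-Algebra.Elementary_Groups" "HOL-Algebra.Product_Groups"
begin

definition int_lattice :: "('i::finite \<Rightarrow> 'a::real_vector) \<Rightarrow> 'a set" where
  "int_lattice b = range (\<lambda>c::'i \<Rightarrow> int. \<Sum>i\<in>UNIV. of_int (c i) *\<^sub>R b i)"

definition lin_indep_family :: "('i \<Rightarrow> 'a::real_vector) \<Rightarrow> bool" where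
  "lin_indep_family b \<longleftrightarrow> inj b \<and> independent (range b)"

definition min_vectors :: "'a::real_inner set \<Rightarrow> 'a set" where
  "min_vectors L = {v \<in> L. v \<noteq> 0 \<and> (\<forall>w\<in>L. w \<noteq> 0 \<longrightarrow> v \<bullet> v \<le> w \<bullet> w)}"

definition well_rounded :: "'a::euclidean_space set \<Rightarrow> bool" where
  "well_rounded L \<longleftrightarrow> span (min_vectors L) = UNIV"

definition add_group :: "'a::ab_group_add set \<Rightarrow> 'a monoid" where
  "add_group L = \<lparr>carrier = L, monoid.mult = (+), one = 0\<rparr>"

end

theory Submission
  imports Defs
begin


datatype f3 = Z0 | Z1 | Z2

lemma UNIV_f3: "(UNIV::f3 set) = {Z0,Z1,Z2}" using f3.exhaust by auto
instance f3 :: finite by standard (simp add: UNIV_f3)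

fun fadd :: "f3 \<Rightarrow> f3 \<Rightarrow> f3" where
  "fadd Z0 y = y" | "fadd x Z0 = x" | "fadd Z1 Z1 = Z2" | "fadd Z1 Z2 = Z0" | "fadd Z2 Z1 = Z0" | "fadd Z2 Z2 = Z1"
fun fmul :: "f3 \<Rightarrow> f3 \<Rightarrow> f3" where
  "fmul Z0 y = Z0" | "fmul x Z0 = Z0" | "fmul Z1 y = y" | "fmul x Z1 = x" | "fmul Z2 Z2 = Z1"

type_synonym t3 = "f3 \<times> f3 \<times> f3"

definition F3l :: "f3 list" where "F3l = [Z0,Z1,Z2]"
definition D3l :: "t3 list" where
  "D3l = [(a,b,c). a \<leftarrow> F3l, b \<leftarrow> F3l, c \<leftarrow> F3l]"

fun dot :: "t3 \<Rightarrow> t3 \<Rightarrow> f3" where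
  "dot (a,b,c) (x,y,z) = fadd (fmul a x) (fadd (fmul b y) (fmul c z))"

definition cnt :: "t3 \<Rightarrow> nat" where
  "cnt t = length (filter (\<lambda>f. dot f t = Z0) D3l)"
definition cnt2 :: "t3 \<Rightarrow> t3 \<Rightarrow> nat" where
  "cnt2 t t' = length (filter (\<lambda>f. dot f t = Z0 \<and> dot f t' = Z0) D3l)"
fun sm :: "f3 \<Rightarrow> t3 \<Rightarrow> t3" where
  "sm s (a,b,c) = (fmul s a, fmul s b, fmul s c)"
definition dep :: "t3 \<Rightarrow> t3 \<Rightarrow> bool" where
  "dep t t' \<longleftrightarrow> t = (Z0,Z0,Z0) \<or> t' = (Z0,Z0,Z0) \<or> t' = t \<or> t' = sm Z2 t"

definition cv :: "t3 \<Rightarrow> int" where "cv t = (if t = (Z0,Z0,Z0) then 27 else 9)"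

lemma cnt_val: "list_all (\<lambda>t. int (cnt t) = cv t) D3l"
  by code_simp

definition D3a :: "t3 list" where "D3a = [(a,b,c). a \<leftarrow> [Z0], b \<leftarrow> F3l, c \<leftarrow> F3l]"
definition D3b :: "t3 list" where "D3b = [(a,b,c). a \<leftarrow> [Z1], b \<leftarrow> F3l, c \<leftarrow> F3l]"
definition D3c :: "t3 list" where "D3c = [(a,b,c). a \<leftarrow> [Z2], b \<leftarrow> F3l, c \<leftarrow> F3l]"

definition bprop :: "t3 \<Rightarrow> t3 \<Rightarrow> bool" where
  "bprop t t' \<longleftrightarrow> cv t + cv t' \<le> 6 * int (cnt2 t t') \<and> (6 * int (cnt2 t t') = cv t + cv t' \<longrightarrow> \<not> dep t t')"

lemma brute_a: "list_all (\<lambda>t. list_all (bprop t) D3l) D3a" by code_simp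
lemma brute_b: "list_all (\<lambda>t. list_all (bprop t) D3l) D3b" by code_simp
lemma brute_c: "list_all (\<lambda>t. list_all (bprop t) D3l) D3c" by code_simp

lemma mem_F3l: "x \<in> set F3l" by (cases x) (simp_all add: F3l_def)

lemma set_D3l: "set D3l = UNIV"
  using mem_F3l by (auto simp: D3l_def)

lemma D3_split: "set D3l = set D3a \<union> set D3b \<union> set D3c"
  by code_simp

lemma bprop_all: "bprop t t'"
proof -
  have "t \<in> set D3a \<union> set D3b \<union> set D3c" using D3_split set_D3l by auto
  moreover have "t' \<in> set D3l" by (simp add: set_D3l)
  moreover have "\<forall>t\<in>set D3a \<union> set D3b \<union> set D3c. \<forall>t'\<in>set D3l. bprop t t'"
    using brute_a brute_b brute_c unfolding list_all_iff by blast
  ultimately show ?thesis by blast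
qed

lemma cnt_all: "int (cnt t) = cv t"
  using cnt_val unfolding list_all_iff set_D3l by blast

lemma distinct_D3l: "distinct D3l" by code_simp

lemma card_filter_D3: "card {f. P f} = length (filter P D3l)"
proof -
  have "{f. P f} = set (filter P D3l)" by (simp add: set_D3l)
  then show ?thesis using distinct_D3l by (metis distinct_card distinct_filter)
qed

lemma cnt_card: "cnt t = card {f. dot f t = Z0}"
  by (simp add: cnt_def card_filter_D3)
lemma cnt2_card: "cnt2 t t' = card {f. dot f t = Z0 \<and> dot f t' = Z0}"
  by (simp add: cnt2_def card_filter_D3)

lemma card_ind: "int (card {x::'a::finite. P x}) = (\<Sum>x\<in>UNIV. if P x then 1 else 0)"
  by (simp add: sum.inter_filter[symmetric])

lemma dot_zero: "dot (Z0,Z0,Z0) t = Z0" by (cases t) auto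

lemma card_nonzero_t3: "card {f::t3. f \<noteq> (Z0,Z0,Z0)} = 26"
  by (simp add: card_filter_D3, code_simp)



lemma comb:
  fixes col :: "'p::finite \<Rightarrow> t3"
  assumes card9: "card (UNIV::'p set) = 9"
  assumes w: "\<And>f. f \<noteq> (Z0,Z0,Z0) \<Longrightarrow> card {p. dot f (col p) = Z0} \<le> 3"
  shows "(\<forall>p q. p \<noteq> q \<longrightarrow> \<not> dep (col p) (col q)) \<and> (\<exists>f. f \<noteq> (Z0,Z0,Z0) \<and> (\<forall>p. dot f (col p) \<noteq> Z0))"
proof -
  define z where "z f = int (card {p. dot f (col p) = Z0})" for f
  define e where "e p q = 6 * int (cnt2 (col p) (col q)) - cv (col p) - cv (col q)" for p q
  have e_nonneg: "e p q \<ge> 0" for p q using bprop_all[of "col p" "col q"] by (simp add: e_def bprop_def)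
  have e_diag: "e p p \<ge> 36" for p
  proof -
    have "cnt2 (col p) (col p) = cnt (col p)" by (simp add: cnt2_def cnt_def)
    then show ?thesis using cnt_all[of "col p"] by (simp add: e_def cv_def)
  qed
  have Zeq: "(\<Sum>f\<in>UNIV. z f) = (\<Sum>p\<in>UNIV. cv (col p))"
  proof -
    have "(\<Sum>f\<in>UNIV. z f) = (\<Sum>f\<in>UNIV. \<Sum>p\<in>UNIV. if dot f (col p) = Z0 then 1 else 0)"
      by (simp add: z_def card_ind)
    also have "\<dots> = (\<Sum>p\<in>UNIV. \<Sum>f\<in>UNIV. if dot f (col p) = Z0 then 1 else 0)"
      by (rule sum.swap)
    also have "\<dots> = (\<Sum>p\<in>UNIV. int (cnt (col p)))"
      by (simp add: cnt_card card_ind)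
    finally show ?thesis by (simp add: cnt_all)
  qed
  have ind_mult: "(if P then 1 else 0) * (if Q then 1 else 0) = (if P \<and> Q then 1 else (0::int))" for P Q
    by simp
  have Seq: "(\<Sum>f\<in>UNIV. (z f)^2) = (\<Sum>p\<in>UNIV. \<Sum>q\<in>UNIV. int (cnt2 (col p) (col q)))"
  proof -
    have "(\<Sum>f\<in>UNIV. (z f)^2) = (\<Sum>f\<in>UNIV. \<Sum>p\<in>UNIV. \<Sum>q\<in>UNIV. (if dot f (col p) = Z0 \<and> dot f (col q) = Z0 then 1 else 0))"
    proof (rule sum.cong[OF refl])
      fix f
      have "(z f)^2 = (\<Sum>p\<in>UNIV. if dot f (col p) = Z0 then 1 else 0) * (\<Sum>q\<in>UNIV. if dot f (col q) = Z0 then 1 else 0)"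
        unfolding z_def card_ind power2_eq_square ..
      also have "\<dots> = (\<Sum>p\<in>UNIV. \<Sum>q\<in>UNIV. (if dot f (col p) = Z0 then 1 else 0) * (if dot f (col q) = Z0 then 1 else 0))"
        by (rule sum_product)
      finally show "(z f)^2 = (\<Sum>p\<in>UNIV. \<Sum>q\<in>UNIV. (if dot f (col p) = Z0 \<and> dot f (col q) = Z0 then 1 else 0))"
        unfolding ind_mult .
    qed
    also have "\<dots> = (\<Sum>p\<in>UNIV. \<Sum>f\<in>UNIV. \<Sum>q\<in>UNIV. (if dot f (col p) = Z0 \<and> dot f (col q) = Z0 then 1 else 0))"
      by (rule sum.swap)
    also have "\<dots> = (\<Sum>p\<in>UNIV. \<Sum>q\<in>UNIV. \<Sum>f\<in>UNIV. (if dot f (col p) = Z0 \<and> dot f (col q) = Z0 then 1 else 0))"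
      by (rule sum.cong[OF refl], rule sum.swap)
    also have "\<dots> = (\<Sum>p\<in>UNIV. \<Sum>q\<in>UNIV. int (cnt2 (col p) (col q)))"
      unfolding cnt2_card card_ind ..
    finally show ?thesis .
  qed
  define F0 where "F0 = (Z0,Z0,Z0)"
  define NZ where "NZ = UNIV - {F0}"
  have z0: "z F0 = 9" using card9 by (simp add: z_def F0_def dot_zero)
  have zle: "0 \<le> z f \<and> z f \<le> 3" if "f \<in> NZ" for f
    using w[of f] that by (auto simp: z_def NZ_def F0_def)
  have sumZ: "(\<Sum>f\<in>UNIV. z f) = 9 + (\<Sum>f\<in>NZ. z f)"
    by (simp add: NZ_def sum.remove[of UNIV F0] z0)
  have sumS: "(\<Sum>f\<in>UNIV. (z f)^2) = 81 + (\<Sum>f\<in>NZ. (z f)^2)"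
    by (simp add: NZ_def sum.remove[of UNIV F0] z0)
  have slack: "0 \<le> 3 * z f - (z f)^2" if "f \<in> NZ" for f
  proof -
    have "0 \<le> z f * (3 - z f)" using zle[OF that] by simp
    then show ?thesis by (simp add: algebra_simps power2_eq_square)
  qed
  have sumE: "(\<Sum>p\<in>UNIV. \<Sum>q\<in>UNIV. e p q) = 6 * (\<Sum>f\<in>UNIV. (z f)^2) - 18 * (\<Sum>f\<in>UNIV. z f)"
  proof -
    have "(\<Sum>p\<in>UNIV. \<Sum>q\<in>UNIV. e p q) = 6 * (\<Sum>p\<in>UNIV. \<Sum>q\<in>UNIV. int (cnt2 (col p) (col q))) - 9 * (\<Sum>p\<in>UNIV. cv (col p)) - 9 * (\<Sum>q\<in>UNIV. cv (col q))"
      using card9 by (simp add: e_def sum_subtractf sum_distrib_left sum.swap[of "\<lambda>p q. cv (col p)"])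
    then show ?thesis using Seq Zeq by simp
  qed
  have NZslack: "(\<Sum>f\<in>NZ. 3 * z f - (z f)^2) = 3 * (\<Sum>f\<in>NZ. z f) - (\<Sum>f\<in>NZ. (z f)^2)"
    by (simp add: sum_subtractf sum_distrib_left)
  have Elow: "(\<Sum>p\<in>UNIV. \<Sum>q\<in>UNIV. e p q) \<ge> (\<Sum>p\<in>UNIV. e p p) + (if p0 = q0 then 0 else e p0 q0)" for p0 q0
  proof -
    have "(\<Sum>q\<in>UNIV. e p q) \<ge> e p p + (if p = p0 \<and> p0 \<noteq> q0 then e p0 q0 else 0)" for p
    proof (cases "p = p0 \<and> p0 \<noteq> q0")
      case True
      have "(\<Sum>q\<in>{p,q0}. e p q) \<le> (\<Sum>q\<in>UNIV. e p q)"
        by (rule sum_mono2) (auto simp: e_nonneg)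
      then show ?thesis using True by simp
    next
      case False
      have 1: "e p p \<le> (\<Sum>q\<in>UNIV. e p q)"
        by (rule member_le_sum) (auto simp: e_nonneg)
      have "(if p = p0 \<and> p0 \<noteq> q0 then e p0 q0 else 0) = 0" using False by (simp only: if_False)
      then show ?thesis using 1 by linarith
    qed
    then have "(\<Sum>p\<in>UNIV. \<Sum>q\<in>UNIV. e p q) \<ge> (\<Sum>p\<in>UNIV. e p p + (if p = p0 \<and> p0 \<noteq> q0 then e p0 q0 else 0))"
      by (intro sum_mono) auto
    also have "(\<Sum>p\<in>UNIV. e p p + (if p = p0 \<and> p0 \<noteq> q0 then e p0 q0 else 0)) = (\<Sum>p\<in>UNIV. e p p) + (if p0 = q0 then 0 else e p0 q0)"
    proof -
      have "(\<Sum>p\<in>UNIV. e p p + (if p = p0 \<and> p0 \<noteq> q0 then e p0 q0 else 0)) = (\<Sum>p\<in>UNIV. e p p) + (\<Sum>p\<in>UNIV. if p = p0 \<and> p0 \<noteq> q0 then e p0 q0 else 0)"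
        by (rule sum.distrib)
      also have "(\<Sum>p\<in>UNIV. if p = p0 \<and> p0 \<noteq> q0 then e p0 q0 else 0) = (if p0 = q0 then 0 else e p0 q0)"
        by (cases "p0 = q0") simp_all
      finally show ?thesis .
    qed
    finally show ?thesis .
  qed
  have diag: "(\<Sum>p\<in>UNIV. e p p) \<ge> 324"
  proof -
    have "(\<Sum>p\<in>UNIV. e p p) \<ge> (\<Sum>p\<in>(UNIV::'p set). 36)" by (rule sum_mono) (simp add: e_diag)
    then show ?thesis using card9 by simp
  qed
  have slack_sum_nn: "0 \<le> (\<Sum>f\<in>NZ. 3 * z f - (z f)^2)"
    by (rule sum_nonneg) (use slack in blast)
  have slack0: "(\<Sum>f\<in>NZ. 3 * z f - (z f)^2) = 0" and offd: "\<And>p0 q0. p0 \<noteq> q0 \<Longrightarrow> e p0 q0 = 0"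
  proof -
    have E: "(\<Sum>p\<in>UNIV. \<Sum>q\<in>UNIV. e p q) = 324 - 6 * (\<Sum>f\<in>NZ. 3 * z f - (z f)^2)"
      using sumE sumZ sumS NZslack by simp
    show "(\<Sum>f\<in>NZ. 3 * z f - (z f)^2) = 0" using E Elow[of undefined undefined] diag slack_sum_nn by simp
    show "e p0 q0 = 0" if "p0 \<noteq> q0" for p0 q0
      using E Elow[of p0 q0] diag slack_sum_nn e_nonneg[of p0 q0] that by simp
  qed
  have ndep: "\<not> dep (col p) (col q)" if "p \<noteq> q" for p q
    using bprop_all[of "col p" "col q"] offd[OF that] by (simp add: bprop_def e_def)
  have zval: "z f = 0 \<or> z f = 3" if "f \<in> NZ" for f
  proof -
    have "\<forall>f\<in>NZ. 3 * z f - (z f)^2 = 0"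
      using sum_nonneg_eq_0_iff[of NZ "\<lambda>f. 3 * z f - (z f)^2"] slack0 slack by simp
    then have "z f * (3 - z f) = 0" using that by (simp add: algebra_simps power2_eq_square)
    then show ?thesis by auto
  qed
  have colnz: "col p \<noteq> (Z0,Z0,Z0)" for p
  proof -
    have "\<exists>q. q \<noteq> p"
    proof (rule ccontr)
      assume "\<not> (\<exists>q. q \<noteq> p)"
      then have "(UNIV::'p set) = {p}" by auto
      then have "card (UNIV::'p set) = card {p}" by (rule arg_cong)
      then show False using card9 by simp
    qed
    then obtain q where "q \<noteq> p" by blast
    then show ?thesis using ndep[of p q] by (auto simp: dep_def)
  qed
  have Z81: "(\<Sum>f\<in>UNIV. z f) = 81"
    using Zeq colnz card9 by (simp add: cv_def)
  have ex: "\<exists>f. f \<noteq> (Z0,Z0,Z0) \<and> (\<forall>p. dot f (col p) \<noteq> Z0)"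
  proof (rule ccontr)
    assume "\<not> ?thesis"
    then have "\<forall>f\<in>NZ. z f \<noteq> 0" by (auto simp: NZ_def F0_def z_def)
    then have "\<forall>f\<in>NZ. z f = 3" using zval by blast
    then have "(\<Sum>f\<in>NZ. z f) = (\<Sum>f\<in>NZ. 3)" by simp
    also have "\<dots> = 78"
    proof -
      have "NZ = {f. f \<noteq> (Z0,Z0,Z0)}" by (auto simp: NZ_def F0_def)
      then show ?thesis using card_nonzero_t3 by simp
    qed
    finally show False using Z81 sumZ by simp
  qed
  show ?thesis using ndep ex by blast
qed


lemma fadd_comm: "fadd x y = fadd y x" by (cases x; cases y) auto
lemma fadd_assoc: "fadd (fadd x y) z = fadd x (fadd y z)" by (cases x; cases y; cases z) auto
lemma fadd_lc: "fadd x (fadd y z) = fadd y (fadd x z)" by (cases x; cases y; cases z) auto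
lemma fmul_comm: "fmul x y = fmul y x" by (cases x; cases y) auto
lemma fmul_assoc: "fmul (fmul x y) z = fmul x (fmul y z)" by (cases x; cases y; cases z) auto
lemma fmul_lc: "fmul x (fmul y z) = fmul y (fmul x z)" by (cases x; cases y; cases z) auto
lemma fmul_distr: "fmul s (fadd x y) = fadd (fmul s x) (fmul s y)" by (cases s; cases x; cases y) auto
lemma fmul_distr2: "fmul (fadd x y) s = fadd (fmul x s) (fmul y s)" by (cases s; cases x; cases y) auto
lemma fmul_one [simp]: "fmul Z1 x = x" "fmul x Z1 = x" by (cases x; simp)+
lemma fmul_sq: "s \<noteq> Z0 \<Longrightarrow> fmul s (fmul s x) = x" by (cases s; cases x) auto
lemma fmul_sq1: "s \<noteq> Z0 \<Longrightarrow> fmul s s = Z1" by (cases s) auto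

lemmas f3_laws = fadd_assoc fadd_comm fadd_lc fmul_assoc fmul_comm fmul_lc fmul_distr fmul_distr2

fun vadd :: "t3 \<Rightarrow> t3 \<Rightarrow> t3" where
  "vadd (a,b,c) (x,y,z) = (fadd a x, fadd b y, fadd c z)"

lemma dot_sm_right: "dot f (sm s t) = fmul s (dot f t)"
  by (cases f; cases t) (simp add: fmul_distr fmul_lc)
lemma dot_sm_left: "dot (sm s f) t = fmul s (dot f t)"
  by (cases f; cases t) (simp add: fmul_distr fmul_assoc)
lemma dot_vadd_left: "dot (vadd f g) t = fadd (dot f t) (dot g t)"
  by (cases f; cases g; cases t) (simp add: fmul_distr2 fadd_assoc fadd_comm fadd_lc)
lemma sm_sm: "sm s (sm s' t) = sm (fmul s s') t"
  by (cases t) (simp add: fmul_assoc)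
lemma sm_one: "sm Z1 t = t" by (cases t) simp

definition compl :: "t3 \<Rightarrow> t3 \<times> t3" where
  "compl fu = (if fst fu \<noteq> Z0 then ((Z0,Z1,Z0),(Z0,Z0,Z1))
     else if fst (snd fu) \<noteq> Z0 then ((Z1,Z0,Z0),(Z0,Z0,Z1)) else ((Z1,Z0,Z0),(Z0,Z1,Z0)))"

lemma compl_brute: "list_all (\<lambda>fu. fu = (Z0,Z0,Z0) \<or> distinct (map (\<lambda>n. (dot (fst (compl fu)) n, dot (snd (compl fu)) n)) (filter (\<lambda>n. dot fu n = Z1) D3l))) D3l"
  by code_simp

lemma compl_inj:
  assumes "fu \<noteq> (Z0,Z0,Z0)" "dot fu n = Z1" "dot fu n' = Z1"
    "dot (fst (compl fu)) n = dot (fst (compl fu)) n'" "dot (snd (compl fu)) n = dot (snd (compl fu)) n'"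
  shows "n = n'"
proof -
  have "distinct (map (\<lambda>n. (dot (fst (compl fu)) n, dot (snd (compl fu)) n)) (filter (\<lambda>n. dot fu n = Z1) D3l))"
    using compl_brute assms(1) unfolding list_all_iff set_D3l by blast
  then have "inj_on (\<lambda>n. (dot (fst (compl fu)) n, dot (snd (compl fu)) n)) (set (filter (\<lambda>n. dot fu n = Z1) D3l))"
    by (simp add: distinct_map)
  moreover have "n \<in> set (filter (\<lambda>n. dot fu n = Z1) D3l)" "n' \<in> set (filter (\<lambda>n. dot fu n = Z1) D3l)"
    using assms(2,3) by (simp_all add: set_D3l)
  ultimately show ?thesis using assms(4,5) by (auto dest: inj_onD)
qed

lemma labeling:
  fixes col :: "'p \<Rightarrow> t3"
  assumes ndep: "\<And>p q. p \<noteq> q \<Longrightarrow> \<not> dep (col p) (col q)"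
  assumes fu: "fu \<noteq> (Z0,Z0,Z0)" "\<And>p. dot fu (col p) \<noteq> Z0"
  defines "fx \<equiv> fst (compl fu)" and "fy \<equiv> snd (compl fu)"
  shows "inj (\<lambda>p. (fmul (dot fu (col p)) (dot fx (col p)), fmul (dot fu (col p)) (dot fy (col p))))"
proof (rule injI)
  fix p q
  assume eq: "(fmul (dot fu (col p)) (dot fx (col p)), fmul (dot fu (col p)) (dot fy (col p))) =
    (fmul (dot fu (col q)) (dot fx (col q)), fmul (dot fu (col q)) (dot fy (col q)))"
  define sp where "sp = dot fu (col p)"
  define sq where "sq = dot fu (col q)"
  have sp: "sp \<noteq> Z0" and sq: "sq \<noteq> Z0" using fu by (auto simp: sp_def sq_def)
  have "sm sp (col p) = sm sq (col q)"
  proof (rule compl_inj[OF fu(1)])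
    show "dot fu (sm sp (col p)) = Z1" using sp by (simp add: dot_sm_right fmul_sq1 sp_def)
    show "dot fu (sm sq (col q)) = Z1" using sq by (simp add: dot_sm_right fmul_sq1 sq_def)
    show "dot (fst (compl fu)) (sm sp (col p)) = dot (fst (compl fu)) (sm sq (col q))"
      using eq by (simp add: dot_sm_right sp_def sq_def fx_def)
    show "dot (snd (compl fu)) (sm sp (col p)) = dot (snd (compl fu)) (sm sq (col q))"
      using eq by (simp add: dot_sm_right sp_def sq_def fy_def)
  qed
  then have "sm sq (sm sp (col p)) = col q"
    using sq by (simp add: sm_sm fmul_sq1 sm_one)
  then have "col q = sm (fmul sq sp) (col p)" by (simp add: sm_sm)
  moreover have "fmul sq sp \<noteq> Z0" using sp sq by (cases sp; cases sq) auto
  ultimately have "dep (col p) (col q)"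
    unfolding dep_def by (cases "fmul sq sp") (simp_all add: sm_one)
  then show "p = q" using ndep by blast
qed



definition kv :: "(nat \<Rightarrow> 'a::real_inner) \<Rightarrow> int list \<Rightarrow> 'a" where
  "kv u ks = (\<Sum>q<9. (of_int (ks!q) / 3) *\<^sub>R u q)"

lemma kv_norm: "kv u ks \<bullet> kv u ks = (\<Sum>i<9. \<Sum>j<9. (of_int (ks!i) / 3) * (of_int (ks!j) / 3) * (u i \<bullet> u j))"
proof -
  have "kv u ks \<bullet> kv u ks = (\<Sum>i<9. \<Sum>j<9. ((of_int (ks!i) / 3) *\<^sub>R u i) \<bullet> ((of_int (ks!j) / 3) *\<^sub>R u j))"
    unfolding kv_def inner_sum_left inner_sum_right by (rule sum.swap)
  also have "\<dots> = (\<Sum>i<9. \<Sum>j<9. (of_int (ks!i) / 3) * (of_int (ks!j) / 3) * (u i \<bullet> u j))"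
    by (simp add: mult_ac)
  finally show ?thesis .
qed

definition certfull :: "(int list \<times> real \<times> t3) list" where
 "certfull = [([0,3,3,0,0,0,0,0,0],1,(Z0,Z0,Z0)),([0,0,0,0,3,0,0,0,3],1,(Z0,Z0,Z0)),([0,0,0,0,0,3,0,3,0],1,(Z0,Z0,Z0)),([0,1,-1,0,1,-1,0,1,-1],3,(Z0,Z1,Z0)),([1,-1,0,1,-1,0,1,-1,0],1,(Z0,Z1,Z1)),([1,-1,0,1,-1,0,1,2,0],1,(Z0,Z1,Z1)),([1,-1,0,1,2,0,1,-1,0],1,(Z0,Z1,Z1)),([1,-1,0,-2,-1,0,-2,-1,0],1,(Z0,Z1,Z1)),([1,2,0,1,-1,0,1,-1,0],1,(Z0,Z1,Z1)),([-2,-1,0,1,-1,0,1,-1,0],1,(Z0,Z1,Z1)),([0,0,0,1,1,1,-1,-1,-1],3,(Z1,Z0,Z0)),([0,1,-1,1,-1,0,-1,0,1],3,(Z1,Z1,Z0)),([0,-1,1,1,0,-1,-1,1,0],3,(Z1,Z2,Z0))]"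

definition certvs :: "(int list \<times> real) list" where
  "certvs = map (\<lambda>(ks,w,a). (ks,w)) certfull"

lemma cert_identity:
  fixes u :: "nat \<Rightarrow> 'a::real_inner"
  assumes "\<And>q. q<9 \<Longrightarrow> u q \<bullet> u q = m"
  shows "(\<Sum>(ks,w)\<leftarrow>certvs. w * (kv u ks \<bullet> kv u ks)) = 20 * m"
  using assms
  by (simp add: certvs_def certfull_def kv_norm eval_nat_numeral sum.lessThan_Suc inner_commute algebra_simps)

lemma cert_false:
  fixes u :: "nat \<Rightarrow> 'a::real_inner"
  assumes norms: "\<And>q. q<9 \<Longrightarrow> u q \<bullet> u q = m" and m: "m > 0"
  and lower: "\<And>ks w. (ks,w) \<in> set certvs \<Longrightarrow> m \<le> kv u ks \<bullet> kv u ks"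
  shows False
proof -
  have "(\<Sum>(ks,w)\<leftarrow>certvs. w * m) \<le> (\<Sum>(ks,w)\<leftarrow>certvs. w * (kv u ks \<bullet> kv u ks))"
  proof (rule sum_list_mono)
    fix x assume "x \<in> set certvs"
    moreover obtain ks w where x: "x = (ks,w)" by (cases x)
    moreover have "\<forall>(ks,w)\<in>set certvs. w > 0" by (simp add: certvs_def certfull_def)
    ultimately have "w > 0" "m \<le> kv u ks \<bullet> kv u ks" using lower by auto
    then show "(case x of (ks,w) \<Rightarrow> w * m) \<le> (case x of (ks,w) \<Rightarrow> w * (kv u ks \<bullet> kv u ks))"
      using x by simp
  qed
  also have "\<dots> = 20 * m" by (rule cert_identity[OF norms])
  finally have "(\<Sum>(ks,w)\<leftarrow>certvs. w * m) \<le> 20 * m" .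
  moreover have "(\<Sum>(ks,w)\<leftarrow>certvs. w * m) = 21 * m" by (simp add: certvs_def certfull_def)
  ultimately show False using m by simp
qed


fun nv :: "f3 \<Rightarrow> nat" where "nv Z0 = 0" | "nv Z1 = 1" | "nv Z2 = 2"
fun red :: "f3 \<Rightarrow> int" where "red Z0 = 0" | "red Z1 = 1" | "red Z2 = -1"
definition idx :: "f3 \<times> f3 \<Rightarrow> nat" where "idx l = 3 * nv (fst l) + nv (snd l)"
fun Aff :: "t3 \<Rightarrow> f3 \<times> f3 \<Rightarrow> f3" where
  "Aff (a,b,c) (x,y) = fadd (fmul a x) (fadd (fmul b y) c)"
definition F2l :: "(f3 \<times> f3) list" where "F2l = [(x,y). x \<leftarrow> F3l, y \<leftarrow> F3l]"

lemma cert_brute: "list_all (\<lambda>(ks,w,a). list_all (\<lambda>l. (ks ! idx l - red (Aff a l)) mod 3 = 0) F2l \<and> list_ex (\<lambda>q. ks ! q \<noteq> 0) [0..<9]) certfull"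
  by code_simp

lemma cert_data:
  assumes "(ks,w) \<in> set certvs"
  shows "\<exists>a. (\<forall>l. 3 dvd (ks ! idx l - red (Aff a l))) \<and> (\<exists>q<9. ks ! q \<noteq> 0)"
proof -
  obtain a where a: "(ks,w,a) \<in> set certfull" using assms by (auto simp: certvs_def)
  have "\<forall>x\<in>set certfull. (case x of (ks,w,a) \<Rightarrow> list_all (\<lambda>l. (ks ! idx l - red (Aff a l)) mod 3 = 0) F2l \<and> list_ex (\<lambda>q. ks ! q \<noteq> 0) [0..<9])"
    using cert_brute by (simp only: list_all_iff)
  then have "list_all (\<lambda>l. (ks ! idx l - red (Aff a l)) mod 3 = 0) F2l" "list_ex (\<lambda>q. ks ! q \<noteq> 0) [0..<9]"
    using a by auto
  moreover have "l \<in> set F2l" for l using mem_F3l by (cases l) (auto simp: F2l_def)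
  ultimately have A: "\<forall>l. 3 dvd (ks ! idx l - red (Aff a l))" and B: "\<exists>q<9. ks ! q \<noteq> 0"
    by (auto simp: list_all_iff list_ex_iff dvd_eq_mod_eq_0)
  then show ?thesis by blast
qed


locale addsub =
  fixes L :: "'a::real_vector set"
  assumes zero: "0 \<in> L" and add: "x \<in> L \<Longrightarrow> y \<in> L \<Longrightarrow> x + y \<in> L" and neg: "x \<in> L \<Longrightarrow> - x \<in> L"
begin
lemma diff: "x \<in> L \<Longrightarrow> y \<in> L \<Longrightarrow> x - y \<in> L"
  using add neg by (metis diff_conv_add_uminus)
lemma nat_scale: "x \<in> L \<Longrightarrow> of_nat n *\<^sub>R x \<in> L"
  by (induction n) (auto simp: zero add scaleR_add_left algebra_simps)
end

lemma iso_part: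
  fixes L N :: "'a::real_vector set"
  assumes aL: "addsub L" and aN: "addsub N" and NL: "N \<subseteq> L"
  assumes iso: "add_group L Mod N \<cong> product_group {..<(3::nat)} (\<lambda>_. integer_mod_group 3)"
  shows "\<exists>X\<in>L. \<exists>Y\<in>L. \<exists>Z\<in>L. 3 *\<^sub>R X \<in> N \<and> 3 *\<^sub>R Y \<in> N \<and> 3 *\<^sub>R Z \<in> N \<and>
     (\<forall>a b c::nat. a < 3 \<longrightarrow> b < 3 \<longrightarrow> c < 3 \<longrightarrow> (a,b,c) \<noteq> (0,0,0) \<longrightarrow>
        of_nat a *\<^sub>R X + of_nat b *\<^sub>R Y + of_nat c *\<^sub>R Z \<notin> N)"
proof -
  interpret L: addsub L by (rule aL)
  interpret N: addsub N by (rule aN)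
  define G where "G = add_group L"
  define P where "P = product_group {..<(3::nat)} (\<lambda>_. integer_mod_group 3)"
  define I where "I = {..<(3::nat)}"
  define cs where "cs x = r_coset G N x" for x
  obtain h where h: "h \<in> iso (G Mod N) P" using iso unfolding is_iso_def G_def P_def by blast
  have hom: "h \<in> hom (G Mod N) P" and bij: "bij_betw h (carrier (G Mod N)) (carrier P)"
    using h by (auto simp: iso_def)
  have carrQ: "carrier (G Mod N) = cs ` L"
    by (simp add: carrier_FactGroup cs_def G_def add_group_def)
  have carrP: "carrier P = (\<Pi>\<^sub>E i\<in>I. {0..<3})"
    by (simp add: P_def I_def carrier_integer_mod_group)
  have multP: "x \<otimes>\<^bsub>P\<^esub> y = (\<lambda>i\<in>I. (x i + y i) mod 3)" for x y
    by (simp add: P_def I_def)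
  have cs_alt: "cs x = (\<lambda>n. n + x) ` N" for x
    by (auto simp: cs_def r_coset_def G_def add_group_def)
  have cs_mult: "cs x <#>\<^bsub>G\<^esub> cs y = cs (x + y)" for x y
  proof -
    have "cs x <#>\<^bsub>G\<^esub> cs y = {a + b |a b. a \<in> cs x \<and> b \<in> cs y}"
      by (auto simp: set_mult_def G_def add_group_def)
    also have "\<dots> = cs (x + y)"
    proof (intro equalityI subsetI)
      fix w assume "w \<in> {a + b |a b. a \<in> cs x \<and> b \<in> cs y}"
      then obtain n n' where "n \<in> N" "n' \<in> N" "w = (n + x) + (n' + y)" by (auto simp: cs_alt)
      then have "w = (n + n') + (x + y)" "n + n' \<in> N" by (auto simp: algebra_simps N.add)
      then show "w \<in> cs (x + y)" by (auto simp: cs_alt)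
    next
      fix w assume "w \<in> cs (x + y)"
      then obtain n where "n \<in> N" "w = n + (x + y)" by (auto simp: cs_alt)
      then have "w = (n + x) + (0 + y)" by (simp add: algebra_simps)
      moreover have "n + x \<in> cs x" "0 + y \<in> cs y" using \<open>n \<in> N\<close> N.zero
        unfolding cs_alt by blast+
      ultimately show "w \<in> {a + b |a b. a \<in> cs x \<and> b \<in> cs y}" by blast
    qed
    finally show ?thesis .
  qed
  have cs_eq: "cs x = N \<longleftrightarrow> x \<in> N" for x
  proof
    assume "cs x = N"
    moreover have "x \<in> cs x" using N.zero by (force simp: cs_alt)
    ultimately show "x \<in> N" by simp
  next
    assume x: "x \<in> N"
    show "cs x = N"
    proof (intro equalityI subsetI)
      fix w assume "w \<in> cs x" then show "w \<in> N" using x N.add by (auto simp: cs_alt)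
    next
      fix w assume w: "w \<in> N"
      have "w = (w - x) + x" by simp
      then show "w \<in> cs x" using N.diff[OF w x] unfolding cs_alt by (metis imageI)
    qed
  qed
  have hmult: "h (cs (x + y)) = h (cs x) \<otimes>\<^bsub>P\<^esub> h (cs y)" if "x \<in> L" "y \<in> L" for x y
  proof -
    have "cs x \<in> carrier (G Mod N)" "cs y \<in> carrier (G Mod N)" using that carrQ by auto
    then have "h (cs x \<otimes>\<^bsub>G Mod N\<^esub> cs y) = h (cs x) \<otimes>\<^bsub>P\<^esub> h (cs y)"
      using hom by (auto simp: hom_def)
    then show ?thesis by (simp add: cs_mult)
  qed
  have hcarr: "h (cs x) \<in> carrier P" if "x \<in> L" for x
    using bij that carrQ by (auto simp: bij_betw_def)
  have cs0: "cs 0 = N" using cs_eq N.zero by simp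
  have hN: "h N = (\<lambda>i\<in>I. 0)"
  proof -
    have e: "h N = h N \<otimes>\<^bsub>P\<^esub> h N" using hmult[of 0 0] L.zero cs0 by simp
    have c: "h N \<in> (\<Pi>\<^sub>E i\<in>I. {0..<3})" using hcarr[of 0] L.zero cs0 carrP by simp
    have hz: "h N i = 0" if i: "i \<in> I" for i
    proof -
      have "h N i = (h N \<otimes>\<^bsub>P\<^esub> h N) i" by (rule fun_cong[OF e])
      also have "\<dots> = (h N i + h N i) mod 3" unfolding multP using i by simp
      finally have a: "h N i = (h N i + h N i) mod 3" .
      have "h N i \<in> {0..<3}" using c i by blast
      then have "h N i = 0 \<or> h N i = 1 \<or> h N i = 2" by auto
      then show "h N i = 0" using a by auto
    qed
    have ext: "h N \<in> extensional I" using c by (simp add: PiE_def)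
    show ?thesis using hz ext by (auto simp: extensional_def fun_eq_iff)
  qed
  define E where "E j = (\<lambda>i\<in>I. if i = j then 1 else (0::int))" for j
  have E_carr: "E j \<in> carrier P" for j by (simp add: carrP E_def)
  have pre: "\<exists>x\<in>L. h (cs x) = E j" for j
  proof -
    have "E j \<in> h ` carrier (G Mod N)" using bij E_carr by (auto simp: bij_betw_def)
    then show ?thesis using carrQ by auto
  qed
  obtain X Y Z where XL: "X \<in> L" "h (cs X) = E 0" and YL: "Y \<in> L" "h (cs Y) = E 1"
    and ZL: "Z \<in> L" "h (cs Z) = E 2" using pre by meson
  have hmul: "h (cs (of_nat n *\<^sub>R x)) = (\<lambda>i\<in>I. (int n * e i) mod 3)"
    if "x \<in> L" "h (cs x) = e" "e \<in> carrier P" for n x e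
  proof (induction n)
    case 0
    then show ?case using cs0 hN by simp
  next
    case (Suc n)
    have "of_nat (Suc n) *\<^sub>R x = of_nat n *\<^sub>R x + x" by (simp add: algebra_simps)
    then have "h (cs (of_nat (Suc n) *\<^sub>R x)) = h (cs (of_nat n *\<^sub>R x)) \<otimes>\<^bsub>P\<^esub> h (cs x)"
      using hmult[of "of_nat n *\<^sub>R x" x] L.nat_scale that(1) by simp
    also have "\<dots> = (\<lambda>i\<in>I. (int (Suc n) * e i) mod 3)"
      using Suc that(2) by (auto simp: multP fun_eq_iff mod_add_right_eq algebra_simps)
    finally show ?case .
  qed
  have three: "3 *\<^sub>R x \<in> N" if "x \<in> L" "h (cs x) = e" "e \<in> carrier P" for x e
  proof -
    have "h (cs (of_nat 3 *\<^sub>R x)) = (\<lambda>i\<in>I. 0)" using hmul[OF that, of 3] by simp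
    then have "h (cs (3 *\<^sub>R x)) = h (cs 0)" using hN cs0 by simp
    moreover have "cs (3 *\<^sub>R x) \<in> carrier (G Mod N)" "cs 0 \<in> carrier (G Mod N)"
      using carrQ L.nat_scale[OF that(1), of 3] L.zero by auto
    ultimately have "cs (3 *\<^sub>R x) = cs 0" using bij by (auto simp: bij_betw_def inj_on_def)
    then show ?thesis using cs0 cs_eq by simp
  qed
  have comb: "of_nat a *\<^sub>R X + of_nat b *\<^sub>R Y + of_nat c *\<^sub>R Z \<notin> N"
    if "a < 3" "b < 3" "c < 3" "(a,b,c) \<noteq> (0,0,0)" for a b c :: nat
  proof
    assume inN: "of_nat a *\<^sub>R X + of_nat b *\<^sub>R Y + of_nat c *\<^sub>R Z \<in> N"
    have aX: "of_nat a *\<^sub>R X \<in> L" and bY: "of_nat b *\<^sub>R Y \<in> L" and cZ: "of_nat c *\<^sub>R Z \<in> L"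
      using XL YL ZL L.nat_scale by auto
    have "h (cs (of_nat a *\<^sub>R X + of_nat b *\<^sub>R Y + of_nat c *\<^sub>R Z)) =
          (h (cs (of_nat a *\<^sub>R X)) \<otimes>\<^bsub>P\<^esub> h (cs (of_nat b *\<^sub>R Y))) \<otimes>\<^bsub>P\<^esub> h (cs (of_nat c *\<^sub>R Z))"
      using hmult aX bY cZ L.add by simp
    also have "\<dots> = (\<lambda>i\<in>I. (((int a * E 0 i) mod 3 + (int b * E 1 i) mod 3) mod 3 + (int c * E 2 i) mod 3) mod 3)"
      using hmul[OF XL E_carr, of a] hmul[OF YL E_carr, of b] hmul[OF ZL E_carr, of c]
      by (auto simp: multP fun_eq_iff)
    finally have eq: "h (cs (of_nat a *\<^sub>R X + of_nat b *\<^sub>R Y + of_nat c *\<^sub>R Z)) =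
        (\<lambda>i\<in>I. (((int a * E 0 i) mod 3 + (int b * E 1 i) mod 3) mod 3 + (int c * E 2 i) mod 3) mod 3)" .
    have "h (cs (of_nat a *\<^sub>R X + of_nat b *\<^sub>R Y + of_nat c *\<^sub>R Z)) = (\<lambda>i\<in>I. 0)"
    proof -
      have "cs (of_nat a *\<^sub>R X + of_nat b *\<^sub>R Y + of_nat c *\<^sub>R Z) = N" using inN cs_eq by blast
      then show ?thesis using hN by simp
    qed
    then have L0: "(\<lambda>i\<in>I. (((int a * E 0 i) mod 3 + (int b * E 1 i) mod 3) mod 3 + (int c * E 2 i) mod 3) mod 3) = (\<lambda>i\<in>I. 0)"
      by (simp only: eq)
    have "int a mod 3 = 0" using fun_cong[OF L0, of 0] by (simp add: I_def E_def)
    moreover have "int b mod 3 = 0" using fun_cong[OF L0, of 1] by (simp add: I_def E_def)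
    moreover have "int c mod 3 = 0" using fun_cong[OF L0, of 2] by (simp add: I_def E_def)
    ultimately have "a = 0" "b = 0" "c = 0" using that(1-3) by auto
    then show False using that(4) by simp
  qed
  show ?thesis
    using XL YL ZL three[OF XL(1,2) E_carr] three[OF YL(1,2) E_carr] three[OF ZL(1,2) E_carr] comb
    by blast
qed


definition tof :: "int \<Rightarrow> f3" where
  "tof k = (if k mod 3 = 0 then Z0 else if k mod 3 = 1 then Z1 else Z2)"

lemma mod3_cases: "(k::int) mod 3 = 0 \<or> k mod 3 = 1 \<or> k mod 3 = 2" by presburger

lemma tof_add: "tof (a + b) = fadd (tof a) (tof b)"
proof -
  have "(a + b) mod 3 = (a mod 3 + b mod 3) mod 3" by (simp add: mod_add_eq)
  then show ?thesis using mod3_cases[of a] mod3_cases[of b] by (auto simp: tof_def)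
qed

lemma tof_mult: "tof (a * b) = fmul (tof a) (tof b)"
proof -
  have "(a * b) mod 3 = (a mod 3 * (b mod 3)) mod 3" by (simp add: mod_mult_eq)
  then show ?thesis using mod3_cases[of a] mod3_cases[of b] by (auto simp: tof_def)
qed

lemma tof_red: "tof (red x) = x" by (cases x) (simp_all add: tof_def)
lemma tof_nv: "tof (int (nv x)) = x" by (cases x) (simp_all add: tof_def)
lemma tof_zero_iff: "tof k = Z0 \<longleftrightarrow> 3 dvd k" by (auto simp: tof_def dvd_eq_mod_eq_0)
lemma tof_eq_dvd: "tof a = tof b \<Longrightarrow> (3::int) dvd (a - b)"
proof -
  assume "tof a = tof b"
  then have "a mod 3 = b mod 3" using mod3_cases[of a] mod3_cases[of b] by (auto simp: tof_def)
  then show ?thesis by (simp add: mod_eq_dvd_iff)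
qed
lemma red_dvd: "(3::int) dvd (red (tof k) - k)" by (rule tof_eq_dvd) (simp add: tof_red)
lemma red_mul: "red (fmul s x) = red s * red x" by (cases s; cases x) simp_all
lemma red_vals: "red x \<in> {-1,0,1}" by (cases x) simp_all
lemma red_zero_iff: "red x = 0 \<longleftrightarrow> x = Z0" by (cases x) simp_all
lemma red_sq: "x \<noteq> Z0 \<Longrightarrow> red x * red x = 1" by (cases x) simp_all
lemma nv_lt: "nv x < 3" by (cases x) simp_all
lemma nv_inj: "nv x = nv y \<Longrightarrow> x = y" by (cases x; cases y) simp_all
lemma idx_inj: "idx l = idx l' \<Longrightarrow> l = l'"
proof -
  assume "idx l = idx l'"
  then have "3 * nv (fst l) + nv (snd l) = 3 * nv (fst l') + nv (snd l')" by (simp add: idx_def)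
  then have "nv (fst l) = nv (fst l') \<and> nv (snd l) = nv (snd l')" using nv_lt[of "snd l"] nv_lt[of "snd l'"] by arith
  then show "l = l'" using nv_inj by (metis prod.expand)
qed
lemma idx_lt: "idx l < 9" using nv_lt[of "fst l"] nv_lt[of "snd l"] by (simp add: idx_def)

lemma aff_lemma: "s \<noteq> Z0 \<Longrightarrow> fadd (fmul a (fmul s x)) (fadd (fmul b (fmul s y)) (fmul c s)) = fmul s (Aff (a,b,c) (x,y))"
  by (cases a; cases b; cases c; cases s; cases x; cases y) simp_all

lemma dot_col_lemma: "dot (a,b,c) (tof p, tof q, tof r) = tof (int (nv a) * p + int (nv b) * q + int (nv c) * r)"
  by (simp add: tof_add tof_mult tof_nv fadd_assoc)

lemma int_lattice_addsub: "addsub (int_lattice b)"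
proof
  show "0 \<in> int_lattice b" unfolding int_lattice_def
    by (rule image_eqI[where x="\<lambda>_. 0"]) simp_all
next
  fix x y assume "x \<in> int_lattice b" "y \<in> int_lattice b"
  then obtain c d where x: "x = (\<Sum>i\<in>UNIV. of_int (c i) *\<^sub>R b i)" and y: "y = (\<Sum>i\<in>UNIV. of_int (d i) *\<^sub>R b i)"
    by (auto simp: int_lattice_def)
  have "x + y = (\<Sum>i\<in>UNIV. of_int (c i + d i) *\<^sub>R b i)"
    by (simp add: x y sum.distrib scaleR_add_left)
  then show "x + y \<in> int_lattice b" unfolding int_lattice_def by (intro image_eqI[where x="\<lambda>i. c i + d i"]) simp_all
next
  fix x assume "x \<in> int_lattice b"
  then obtain c where x: "x = (\<Sum>i\<in>UNIV. of_int (c i) *\<^sub>R b i)" by (auto simp: int_lattice_def)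
  have "- x = (\<Sum>i\<in>UNIV. of_int (- c i) *\<^sub>R b i)"
    by (simp add: x sum_negf)
  then show "- x \<in> int_lattice b" unfolding int_lattice_def by (intro image_eqI[where x="\<lambda>i. - c i"]) simp_all
qed

lemma int_lattice_smul: "x \<in> int_lattice b \<Longrightarrow> of_int k *\<^sub>R x \<in> int_lattice b"
proof -
  assume "x \<in> int_lattice b"
  then obtain c where x: "x = (\<Sum>i\<in>UNIV. of_int (c i) *\<^sub>R b i)" by (auto simp: int_lattice_def)
  have "of_int k *\<^sub>R x = (\<Sum>i\<in>UNIV. of_int (k * c i) *\<^sub>R b i)"
    by (simp add: x scaleR_sum_right)
  then show ?thesis unfolding int_lattice_def by (intro image_eqI[where x="\<lambda>i. k * c i"]) simp_all
qed

lemma int_lattice_sum: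
  assumes "finite A" "\<And>i. i \<in> A \<Longrightarrow> w i \<in> int_lattice b"
  shows "(\<Sum>i\<in>A. of_int (k i) *\<^sub>R w i) \<in> int_lattice b"
  using assms
proof (induction A rule: finite_induct)
  case empty
  then show ?case using addsub.zero[OF int_lattice_addsub] by simp
next
  case (insert x F)
  have "w x \<in> int_lattice b" using insert.prems by simp
  then have "of_int (k x) *\<^sub>R w x \<in> int_lattice b" by (rule int_lattice_smul)
  moreover have "(\<Sum>i\<in>F. of_int (k i) *\<^sub>R w i) \<in> int_lattice b" using insert by simp
  ultimately have "of_int (k x) *\<^sub>R w x + (\<Sum>i\<in>F. of_int (k i) *\<^sub>R w i) \<in> int_lattice b"
    by (rule addsub.add[OF int_lattice_addsub])
  then show ?case using insert.hyps by simp
qed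

lemma int_lattice_mem: "(\<Sum>i\<in>UNIV. of_int (k i) *\<^sub>R b i) \<in> int_lattice b"
  unfolding int_lattice_def by blast

lemma indep_coef:
  fixes v :: "'i::finite \<Rightarrow> 'a::real_vector"
  assumes "lin_indep_family v" "(\<Sum>i\<in>UNIV. c i *\<^sub>R v i) = 0"
  shows "c i = 0"
proof -
  have inj: "inj v" and ind: "independent (range v)" using assms(1) by (auto simp: lin_indep_family_def)
  define u where "u x = c (inv_into UNIV v x)" for x
  have "(\<Sum>x\<in>range v. u x *\<^sub>R x) = (\<Sum>i\<in>UNIV. u (v i) *\<^sub>R v i)"
    using inj by (simp add: sum.reindex)
  also have "\<dots> = 0" using assms(2) inj by (simp add: u_def)
  finally have "(\<Sum>x\<in>range v. u x *\<^sub>R x) = 0" .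
  then have "u (v i) = 0" using real_vector.independentD[OF ind, of "range v" u "v i"] by simp
  then show ?thesis using inj by (simp add: u_def)
qed

theorem lemma7p6:
  shows "\<not> (\<exists>(b :: 9 \<Rightarrow> real^9) (v :: 9 \<Rightarrow> real^9).
            lin_indep_family b \<and>
            well_rounded (int_lattice b) \<and>
            lin_indep_family v \<and>
            (\<forall>i. v i \<in> min_vectors (int_lattice b)) \<and>
            (add_group (int_lattice b) Mod int_lattice v)
               \<cong> product_group {..<(3::nat)} (\<lambda>_. integer_mod_group 3))"
proof
  assume "\<exists>(b :: 9 \<Rightarrow> real^9) (v :: 9 \<Rightarrow> real^9).
            lin_indep_family b \<and>
            well_rounded (int_lattice b) \<and>
            lin_indep_family v \<and>
            (\<forall>i. v i \<in> min_vectors (int_lattice b)) \<and>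
            (add_group (int_lattice b) Mod int_lattice v)
               \<cong> product_group {..<(3::nat)} (\<lambda>_. integer_mod_group 3)"
  then obtain b v :: "9 \<Rightarrow> real^9" where hv: "lin_indep_family v"
    and vmin: "\<And>i. v i \<in> min_vectors (int_lattice b)"
    and iso: "(add_group (int_lattice b) Mod int_lattice v) \<cong> product_group {..<(3::nat)} (\<lambda>_. integer_mod_group 3)"
    by blast
  define L where "L = int_lattice b"
  define N where "N = int_lattice v"
  have aL: "addsub L" and aN: "addsub N" unfolding L_def N_def by (rule int_lattice_addsub)+
  interpret L: addsub L by (rule aL)
  interpret N: addsub N by (rule aN)
  have vL: "v i \<in> L" for i using vmin[of i] by (simp add: min_vectors_def L_def)
  have vnz: "v i \<noteq> 0" for i using vmin[of i] by (simp add: min_vectors_def)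
  have vle: "w \<in> L \<Longrightarrow> w \<noteq> 0 \<Longrightarrow> v i \<bullet> v i \<le> w \<bullet> w" for i w
    using vmin[of i] by (simp add: min_vectors_def L_def)
  have NL: "N \<subseteq> L"
  proof
    fix x assume "x \<in> N"
    then obtain k where "x = (\<Sum>i\<in>UNIV. of_int (k i) *\<^sub>R v i)" by (auto simp: N_def int_lattice_def)
    then show "x \<in> L" using int_lattice_sum[of UNIV v b k] vL by (simp add: L_def)
  qed
  define m where "m = v 0 \<bullet> v 0"
  have vm: "v i \<bullet> v i = m" for i
    using vle[OF vL vnz, of i 0] vle[OF vL vnz, of 0 i] by (simp add: m_def)
  have minL: "w \<in> L \<Longrightarrow> w \<noteq> 0 \<Longrightarrow> m \<le> w \<bullet> w" for w using vle[of w 0] by (simp add: m_def)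
  have mpos: "m > 0" using vnz[of 0] by (simp add: m_def)
  have indep: "(\<Sum>i\<in>UNIV. c i *\<^sub>R v i) = 0 \<Longrightarrow> c i = 0" for c i
    using indep_coef[OF hv] by blast
  have iso': "add_group L Mod N \<cong> product_group {..<(3::nat)} (\<lambda>_. integer_mod_group 3)"
    using iso by (simp only: L_def N_def)
  define Q where "Q X Y Z \<longleftrightarrow> 3 *\<^sub>R X \<in> N \<and> 3 *\<^sub>R Y \<in> N \<and> 3 *\<^sub>R Z \<in> N \<and>
     (\<forall>a b c::nat. a < 3 \<longrightarrow> b < 3 \<longrightarrow> c < 3 \<longrightarrow> (a,b,c) \<noteq> (0,0,0) \<longrightarrow>
        of_nat a *\<^sub>R X + of_nat b *\<^sub>R Y + of_nat c *\<^sub>R Z \<notin> N)" for X Y Z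
  have ex: "\<exists>X\<in>L. \<exists>Y\<in>L. \<exists>Z\<in>L. Q X Y Z" unfolding Q_def by (rule iso_part[OF aL aN NL iso'])
  then obtain X Y Z where XYZ0: "X \<in> L" "Y \<in> L" "Z \<in> L" "Q X Y Z" by blast
  have XYZ: "X \<in> L" "Y \<in> L" "Z \<in> L" "3 *\<^sub>R X \<in> N" "3 *\<^sub>R Y \<in> N" "3 *\<^sub>R Z \<in> N"
    using XYZ0 unfolding Q_def by simp_all
  have notN': "\<forall>a b c::nat. a < 3 \<longrightarrow> b < 3 \<longrightarrow> c < 3 \<longrightarrow> (a,b,c) \<noteq> (0,0,0) \<longrightarrow>
        of_nat a *\<^sub>R X + of_nat b *\<^sub>R Y + of_nat c *\<^sub>R Z \<notin> N"
    using XYZ0(4) unfolding Q_def by (elim conjE)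
  have notN: "of_nat a *\<^sub>R X + of_nat b *\<^sub>R Y + of_nat c *\<^sub>R Z \<notin> N"
    if "a < 3" "b < 3" "c < 3" "(a,b,c) \<noteq> (0,0,0)" for a b c :: nat
    using notN' that by blast
  define V3 where "V3 k = (\<Sum>i\<in>UNIV. (of_int (k i) / 3) *\<^sub>R v i)" for k :: "9 \<Rightarrow> int"
  have V3_of: "\<exists>K. x = V3 K" if "3 *\<^sub>R x \<in> N" for x
  proof -
    have "3 *\<^sub>R x \<in> range (\<lambda>c::9\<Rightarrow>int. \<Sum>i\<in>UNIV. of_int (c i) *\<^sub>R v i)"
      using that by (simp only: N_def int_lattice_def)
    then obtain K where K: "3 *\<^sub>R x = (\<Sum>i\<in>UNIV. of_int (K i) *\<^sub>R v i)" by (rule rangeE)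
    have "x = (1/3) *\<^sub>R (3 *\<^sub>R x)" by (simp only: scaleR_scaleR) simp
    also have "\<dots> = V3 K" unfolding K V3_def scaleR_sum_right scaleR_scaleR by simp
    finally show ?thesis by blast
  qed
  obtain KX where KX: "X = V3 KX" using V3_of[OF XYZ(4)] by (elim exE)
  obtain KY where KY: "Y = V3 KY" using V3_of[OF XYZ(5)] by (elim exE)
  obtain KZ where KZ: "Z = V3 KZ" using V3_of[OF XYZ(6)] by (elim exE)
  have V3_add: "V3 k + V3 k' = V3 (\<lambda>i. k i + k' i)" for k k'
    by (simp add: V3_def sum.distrib[symmetric] scaleR_add_left add_divide_distrib)
  have V3_nat: "of_nat a *\<^sub>R V3 k = V3 (\<lambda>i. int a * k i)" for a k
    by (simp add: V3_def scaleR_sum_right)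
  have V3_int: "V3 k \<in> N" if "\<forall>i. 3 dvd k i" for k
  proof -
    have e: "real_of_int (k i) / 3 = real_of_int (k i div 3)" for i
    proof -
      have "k i = 3 * (k i div 3)" using that by simp
      then have "real_of_int (k i) = 3 * real_of_int (k i div 3)" by (metis of_int_mult of_int_numeral)
      then show ?thesis by simp
    qed
    have "V3 k = (\<Sum>i\<in>UNIV. of_int (k i div 3) *\<^sub>R v i)"
      unfolding V3_def e ..
    then show ?thesis unfolding N_def using int_lattice_mem by metis
  qed
  have V3_N: "3 dvd k i" if "V3 k \<in> N" for k i
  proof -
    have "V3 k \<in> range (\<lambda>c::9\<Rightarrow>int. \<Sum>i\<in>UNIV. of_int (c i) *\<^sub>R v i)"
      using that by (simp only: N_def int_lattice_def)
    then obtain c where c: "V3 k = (\<Sum>i\<in>UNIV. of_int (c i) *\<^sub>R v i)" by (rule rangeE)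
    have "(\<Sum>i\<in>UNIV. (of_int (k i) / 3 - of_int (c i)) *\<^sub>R v i) = 0"
      using c by (simp add: V3_def scaleR_diff_left sum_subtractf)
    then have "of_int (k i) / 3 - of_int (c i) = (0::real)" by (rule indep)
    then have "k i = 3 * c i" by linarith
    then show ?thesis by simp
  qed
  have V3_memL: "V3 k' \<in> L" if "V3 k \<in> L" "\<forall>i. 3 dvd (k' i - k i)" for k k'
  proof -
    have "V3 (\<lambda>i. k' i - k i) \<in> L" using V3_int[of "\<lambda>i. k' i - k i"] that(2) NL by auto
    then have "V3 k + V3 (\<lambda>i. k' i - k i) \<in> L" using that(1) L.add by blast
    then show ?thesis by (simp add: V3_add)
  qed
  have V3_zero: "k i = 0" if "V3 k = 0" for k i
  proof -
    have "of_int (k i) / 3 = (0::real)" using indep[of "\<lambda>i. of_int (k i) / 3"] that by (simp add: V3_def)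
    then show ?thesis by simp
  qed
  have V3_inner: "V3 k \<bullet> v j = (\<Sum>i\<in>UNIV. (of_int (k i) / 3) * (v i \<bullet> v j))" for k j
    by (simp add: V3_def inner_sum_left)
  have weight: "6 \<le> card {i. r i \<noteq> 0}"
    if rL: "V3 r \<in> L" and rv: "\<forall>i. r i \<in> {-1,0,1}" and rnz: "\<exists>i. r i \<noteq> 0" for r
  proof -
    define W where "W = V3 r"
    have Wnz: "W \<noteq> 0" using rnz V3_zero by (auto simp: W_def)
    have NW: "W \<bullet> W > 0" using Wnz by simp
    have step: "2 * (of_int (r i) * (W \<bullet> v i)) \<le> (if r i \<noteq> 0 then W \<bullet> W else 0)" for i
    proof (cases "r i = 0")
      case True then show ?thesis by simp
    next
      case False
      define r' where "r' j = (if j = i then r j - 3 * r i else r j)" for j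
      have "W - of_int (r i) *\<^sub>R v i = V3 r'"
      proof -
        have "V3 r' = (\<Sum>j\<in>UNIV. (of_int (r j) / 3) *\<^sub>R v j - (if j = i then of_int (r i) *\<^sub>R v i else 0))"
          unfolding V3_def
        proof (intro sum.cong refl)
          fix j
          show "(of_int (r' j) / 3) *\<^sub>R v j = (of_int (r j) / 3) *\<^sub>R v j - (if j = i then of_int (r i) *\<^sub>R v i else 0)"
          proof (cases "j = i")
            case True
            have sc: "(of_int (r i - 3 * r i) / 3) = (of_int (r i) / 3 - of_int (r i) :: real)" by simp
            have "r' j = r i - 3 * r i" using True by (simp add: r'_def)
            then have "(of_int (r' j) / 3) *\<^sub>R v j = (of_int (r i) / 3) *\<^sub>R v i - of_int (r i) *\<^sub>R v i"
              using True by (simp only: sc scaleR_diff_left)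
            then show ?thesis using True by simp
          next
            case False
            then show ?thesis unfolding r'_def by simp
          qed
        qed
        also have "\<dots> = W - of_int (r i) *\<^sub>R v i" by (simp add: sum_subtractf W_def V3_def)
        finally show ?thesis by simp
      qed
      moreover have "V3 r' \<in> L" using V3_memL[OF rL, of r'] by (auto simp: r'_def)
      moreover have "V3 r' \<noteq> 0"
      proof
        assume "V3 r' = 0"
        then have "r' i = 0" by (rule V3_zero)
        then show False using False by (simp add: r'_def)
      qed
      ultimately have "m \<le> (W - of_int (r i) *\<^sub>R v i) \<bullet> (W - of_int (r i) *\<^sub>R v i)" using minL by simp
      also have "\<dots> = W \<bullet> W - 2 * (of_int (r i) * (W \<bullet> v i)) + (of_int (r i))^2 * m"
        using vm[of i] by (simp add: inner_diff_left inner_diff_right inner_commute algebra_simps power2_eq_square)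
      finally have "m \<le> W \<bullet> W - 2 * (of_int (r i) * (W \<bullet> v i)) + (of_int (r i))^2 * m" .
      moreover have "(of_int (r i))^2 = (1::real)"
      proof -
        have "r i = -1 \<or> r i = 1" using rv False by auto
        then show ?thesis by auto
      qed
      ultimately show ?thesis using False by simp
    qed
    have WW: "W \<bullet> W = (\<Sum>i\<in>UNIV. (of_int (r i) / 3) * (W \<bullet> v i))"
      by (simp add: W_def V3_def inner_sum_right)
    have "(\<Sum>i\<in>UNIV. 2 * (of_int (r i) * (W \<bullet> v i))) \<le> (\<Sum>i\<in>UNIV. (if r i \<noteq> 0 then W \<bullet> W else 0))"
      by (rule sum_mono) (rule step)
    also have "\<dots> = of_nat (card {i. r i \<noteq> 0}) * (W \<bullet> W)"
      by (simp add: sum.If_cases)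
    finally have le: "(\<Sum>i\<in>UNIV. 2 * (of_int (r i) * (W \<bullet> v i))) \<le> of_nat (card {i. r i \<noteq> 0}) * (W \<bullet> W)" .
    have T: "(\<Sum>i\<in>UNIV. of_int (r i) * (W \<bullet> v i)) = 3 * (W \<bullet> W)"
    proof -
      have "W \<bullet> W = (\<Sum>i\<in>UNIV. of_int (r i) * (W \<bullet> v i) / 3)" unfolding WW by (intro sum.cong refl) simp
      also have "\<dots> = (\<Sum>i\<in>UNIV. of_int (r i) * (W \<bullet> v i)) / 3" by (rule sum_divide_distrib[symmetric])
      finally show ?thesis by simp
    qed
    have S2: "(\<Sum>i\<in>UNIV. 2 * (of_int (r i) * (W \<bullet> v i))) = 2 * (\<Sum>i\<in>UNIV. of_int (r i) * (W \<bullet> v i))"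
      by (rule sum_distrib_left[symmetric])
    have "6 * (W \<bullet> W) \<le> of_nat (card {i. r i \<noteq> 0}) * (W \<bullet> W)"
      using le unfolding S2 T by simp
    then have "6 \<le> real (card {i. r i \<noteq> 0})" using NW by simp
    then show ?thesis by linarith
  qed
  define col where "col i = (tof (KX i), tof (KY i), tof (KZ i))" for i
  define nn where "nn \<phi> = (\<lambda>i. int (nv (fst \<phi>)) * KX i + int (nv (fst (snd \<phi>))) * KY i + int (nv (snd (snd \<phi>))) * KZ i)" for \<phi>
  have dot_col: "dot \<phi> (col i) = tof (nn \<phi> i)" for \<phi> i
  proof -
    obtain a b c where abc: "\<phi> = (a,b,c)" by (cases \<phi>)
    show ?thesis unfolding col_def nn_def abc fst_conv snd_conv by (rule dot_col_lemma)
  qed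
  have nn_V3: "V3 (nn \<phi>) = of_nat (nv (fst \<phi>)) *\<^sub>R X + of_nat (nv (fst (snd \<phi>))) *\<^sub>R Y + of_nat (nv (snd (snd \<phi>))) *\<^sub>R Z" for \<phi>
    by (simp add: KX KY KZ V3_nat V3_add nn_def)
  have nn_L: "V3 (nn \<phi>) \<in> L" for \<phi>
    unfolding nn_V3 using XYZ(1-3) L.nat_scale L.add by simp
  have Wphi: "V3 (\<lambda>i. red (dot \<phi> (col i))) \<in> L" for \<phi>
    by (rule V3_memL[OF nn_L[of \<phi>]]) (simp add: dot_col red_dvd)
  have wt: "card {i. dot \<phi> (col i) = Z0} \<le> 3" if phi: "\<phi> \<noteq> (Z0,Z0,Z0)" for \<phi>
  proof -
    obtain a b c where abc: "\<phi> = (a,b,c)" by (cases \<phi>)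
    have nN: "V3 (nn \<phi>) \<notin> N"
      unfolding nn_V3 using notN[of "nv a" "nv b" "nv c"] nv_lt phi nv_inj abc
      by (metis fst_conv nv.simps(1) snd_conv)
    define r where "r = (\<lambda>i. red (dot \<phi> (col i)))"
    have "\<exists>i. r i \<noteq> 0"
    proof (rule ccontr)
      assume "\<not> (\<exists>i. r i \<noteq> 0)"
      then have "\<forall>i. 3 dvd nn \<phi> i" by (auto simp: r_def red_zero_iff dot_col tof_zero_iff)
      then show False using nN V3_int by blast
    qed
    moreover have "V3 r \<in> L" unfolding r_def by (rule Wphi)
    moreover have "\<forall>i. r i \<in> {-1,0,1}" using red_vals by (simp add: r_def)
    ultimately have "6 \<le> card {i. r i \<noteq> 0}" using weight[of r] by blast
    moreover have "{i. r i \<noteq> 0} = - {i. dot \<phi> (col i) = Z0}" by (auto simp: r_def red_zero_iff)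
    moreover have "card (- {i. dot \<phi> (col i) = Z0}) = 9 - card {i. dot \<phi> (col i) = Z0}"
      by (simp add: Compl_eq_Diff_UNIV card_Diff_subset)
    ultimately show ?thesis by simp
  qed
  have card9: "card (UNIV :: 9 set) = 9" by simp
  from comb[OF card9 wt] obtain fu where ndep: "\<And>p q. p \<noteq> q \<Longrightarrow> \<not> dep (col p) (col q)"
    and fu: "fu \<noteq> (Z0,Z0,Z0)" "\<And>p. dot fu (col p) \<noteq> Z0" by blast
  define fx where "fx = fst (compl fu)"
  define fy where "fy = snd (compl fu)"
  define s where "s p = dot fu (col p)" for p
  define labf where "labf p = (fmul (s p) (dot fx (col p)), fmul (s p) (dot fy (col p)))" for p
  have inj_labf: "inj labf"
    using labeling[of col fu, OF ndep fu] unfolding labf_def s_def fx_def fy_def by simp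
  define lab where "lab p = idx (labf p)" for p
  have inj_lab: "inj lab" using inj_labf idx_inj unfolding lab_def inj_def by blast
  have lab_img: "range lab = {..<9}"
  proof -
    have sub: "range lab \<subseteq> {..<9}" unfolding lab_def using idx_lt by blast
    have "card (range lab) = 9" using inj_lab card9 by (simp add: card_image)
    then show ?thesis using sub by (intro card_subset_eq) auto
  qed
  define pi where "pi = inv_into UNIV lab"
  have pi_lab: "pi (lab p) = p" for p using inj_lab by (simp add: pi_def inv_into_f_f)
  have lab_pi: "q < 9 \<Longrightarrow> lab (pi q) = q" for q using lab_img by (simp add: pi_def f_inv_into_f)
  define eps where "eps p = red (s p)" for p
  have eps_sq: "eps p * eps p = 1" for p using fu(2) red_sq by (simp add: eps_def s_def)
  define u where "u q = of_int (eps (pi q)) *\<^sub>R v (pi q)" for q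
  have unorm: "u q \<bullet> u q = m" if "q < 9" for q
  proof -
    have "u q \<bullet> u q = (of_int (eps (pi q) * eps (pi q))) * m" by (simp add: u_def vm)
    then show ?thesis by (simp add: eps_sq)
  qed
  have kv_eq: "kv u ks = V3 (\<lambda>p. ks ! lab p * eps p)" for ks
  proof -
    have "kv u ks = (\<Sum>q\<in>range lab. (of_int (ks!q) / 3) *\<^sub>R u q)" by (simp add: kv_def lab_img)
    also have "\<dots> = (\<Sum>p\<in>UNIV. (of_int (ks ! lab p) / 3) *\<^sub>R u (lab p))"
      using inj_lab by (simp add: sum.reindex)
    also have "\<dots> = V3 (\<lambda>p. ks ! lab p * eps p)"
      unfolding V3_def u_def pi_lab by (intro sum.cong refl) (simp add: algebra_simps)
    finally show ?thesis .
  qed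
  have lower: "m \<le> kv u ks \<bullet> kv u ks" if ksw: "(ks,w) \<in> set certvs" for ks w
  proof -
    obtain a where adv: "\<And>l. 3 dvd (ks ! idx l - red (Aff a l))" and nz: "\<exists>q<9. ks ! q \<noteq> 0"
      using cert_data[OF ksw] by blast
    obtain \<alpha> \<beta> \<gamma> where a: "a = (\<alpha>, \<beta>, \<gamma>)" by (cases a)
    define \<phi> where "\<phi> = vadd (sm \<alpha> fx) (vadd (sm \<beta> fy) (sm \<gamma> fu))"
    have dphi: "dot \<phi> (col p) = fmul (s p) (Aff a (labf p))" for p
    proof -
      have sp: "s p \<noteq> Z0" using fu(2) by (simp add: s_def)
      have "dot \<phi> (col p) = fadd (fmul \<alpha> (dot fx (col p))) (fadd (fmul \<beta> (dot fy (col p))) (fmul \<gamma> (s p)))"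
        by (simp add: \<phi>_def dot_vadd_left dot_sm_left s_def)
      also have "\<dots> = fadd (fmul \<alpha> (fmul (s p) (fmul (s p) (dot fx (col p))))) (fadd (fmul \<beta> (fmul (s p) (fmul (s p) (dot fy (col p))))) (fmul \<gamma> (s p)))"
        using sp by (simp add: fmul_sq)
      also have "\<dots> = fmul (s p) (Aff a (labf p))"
        using aff_lemma[OF sp] by (simp add: a labf_def)
      finally show ?thesis .
    qed
    have mem: "V3 (\<lambda>p. ks ! lab p * eps p) \<in> L"
    proof (rule V3_memL[OF Wphi[of \<phi>]], rule allI)
      fix p
      have "ks ! lab p * eps p - red (dot \<phi> (col p)) = eps p * (ks ! idx (labf p) - red (Aff a (labf p)))"
        by (simp add: dphi red_mul eps_def lab_def algebra_simps)
      then show "3 dvd (ks ! lab p * eps p - red (dot \<phi> (col p)))" using adv by simp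
    qed
    have nz2: "V3 (\<lambda>p. ks ! lab p * eps p) \<noteq> 0"
    proof
      assume z: "V3 (\<lambda>p. ks ! lab p * eps p) = 0"
      obtain q where q: "q < 9" "ks ! q \<noteq> 0" using nz by blast
      have "ks ! lab (pi q) * eps (pi q) = 0" using V3_zero[OF z] by blast
      then have "ks ! q * eps (pi q) = 0" using lab_pi[OF q(1)] by simp
      moreover have "eps (pi q) \<noteq> 0" using eps_sq[of "pi q"] by auto
      ultimately show False using q(2) by simp
    qed
    show ?thesis using minL[OF mem nz2] by (simp add: kv_eq)
  qed
  show False
  proof (rule cert_false[where u=u and m=m])
    show "u q \<bullet> u q = m" if "q < 9" for q using that by (rule unorm)
    show "m > 0" by (rule mpos)
    show "m \<le> kv u ks \<bullet> kv u ks" if "(ks,w) \<in> set certvs" for ks w using that by (rule lower)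
  qed
qed

end
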